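(* Let $M_{1/2} := \mathbb{N}_0[\frac12]$. If an irreducible polynomial $P(x) \in \mathbb{Z}[x]$ is not atomic in the monoid algebra $\mathbb{Q}[M_{1/2}]$, then $P(x)$ has a splitting sequence whose binary string contains infinitely many copies of $S$.
   Context: $\mathbb{Q}[M_{1/2}]$ is the domain of polynomial expressions with rational coefficients and nonnegative dyadic rational exponents; an element is atomic if it is a unit or a finite product of irreducibles. Splitting sequence: for an irreducible $P(x) \in \mathbb{Z}[x]$, a sequence $(P_n(x))_{n \ge 0}$ in $\mathbb{Z}[x]$ with $P_0 = P$ such that for each $n \ge 0$: if $P_n$ is irreducible in $\mathbb{Z}[x]$, then $P_{n+1}(x) = P_n(x^2)$ (the square lifting); if $P_n$ is reducible, then (as $n \ge 1$, $P_{n-1}$ is irreducible and $P_n(x) = P_{n-1}(x^2)$, which factors in $\mathbb{Z}[x]$ as a product of exactly two irreducible polynomials) $P_{n+1}$ is one of these two irreducible factors (a splitting of $P_n$). The binary string of the sequence is $s_0 s_1 s_2 \ldots$ where $s_n = L$ if $P_n$ is irreducible in $\mathbb{Z}[x]$ and $s_n = S$ otherwise. *)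

theory Defs
  imports "HOL-Computational_Algebra.Polynomial" "HOL-Computational_Algebra.Factorial_Ring"
          "HOL-Library.Poly_Mapping"
begin

typedef dyadic = "{q :: rat. 0 \<le> q \<and> (\<exists>n::nat. q * 2 ^ n \<in> \<int>)}"
  by (rule exI[of _ 0]) auto

setup_lifting type_definition_dyadic

instantiation dyadic :: comm_monoid_add
begin

lift_definition zero_dyadic :: dyadic is "0 :: rat" by auto

lift_definition plus_dyadic :: "dyadic \<Rightarrow> dyadic \<Rightarrow> dyadic" is "(+) :: rat \<Rightarrow> rat \<Rightarrow> rat"
proof -
  fix q r :: rat
  assume q: "0 \<le> q \<and> (\<exists>n::nat. q * 2 ^ n \<in> \<int>)" and r: "0 \<le> r \<and> (\<exists>n::nat. r * 2 ^ n \<in> \<int>)"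
  then obtain n m :: nat where n: "q * 2 ^ n \<in> \<int>" and m: "r * 2 ^ m \<in> \<int>" by blast
  have "(q + r) * 2 ^ (n + m) = (q * 2 ^ n) * 2 ^ m + (r * 2 ^ m) * 2 ^ n"
    by (simp add: power_add algebra_simps)
  also have "\<dots> \<in> \<int>" using n m by (metis Ints_add Ints_mult Ints_power Ints_numeral)
  finally show "0 \<le> q + r \<and> (\<exists>n::nat. (q + r) * 2 ^ n \<in> \<int>)" using q r by auto
qed

instance
  by standard (transfer; simp add: algebra_simps)+

end

lift_definition dyadic_of_nat :: "nat \<Rightarrow> dyadic" is "\<lambda>n. of_nat n :: rat"
  by (rule conjI, simp, rule exI[of _ 0], simp)

type_synonym QM = "dyadic \<Rightarrow>\<^sub>0 rat"

definition QM_of_int_poly :: "int poly \<Rightarrow> QM" where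
  "QM_of_int_poly P = (\<Sum>i\<le>degree P. Poly_Mapping.single (dyadic_of_nat i) (of_int (coeff P i)))"

definition atomic_QM :: "QM \<Rightarrow> bool" where
  "atomic_QM f \<longleftrightarrow> f dvd 1 \<or>
     (\<exists>xs. xs \<noteq> [] \<and> (\<forall>x\<in>set xs. irreducible x) \<and> f = prod_list xs)"

definition square_lift :: "int poly \<Rightarrow> int poly" where
  "square_lift p = pcompose p [:0, 0, 1:]"

definition splitting_sequence :: "int poly \<Rightarrow> (nat \<Rightarrow> int poly) \<Rightarrow> bool" where
  "splitting_sequence P Ps \<longleftrightarrow> Ps 0 = P \<and>
     (\<forall>n. (irreducible (Ps n) \<longrightarrow> Ps (Suc n) = square_lift (Ps n)) \<and>
          (\<not> irreducible (Ps n) \<longrightarrow>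
             (\<exists>Q. irreducible (Ps (Suc n)) \<and> irreducible Q \<and> Ps n = Ps (Suc n) * Q)))"

definition string_is_S :: "(nat \<Rightarrow> int poly) \<Rightarrow> nat \<Rightarrow> bool" where
  "string_is_S Ps n \<longleftrightarrow> \<not> irreducible (Ps n)"

end

theory Submission
  imports Defs "HOL-Computational_Algebra.Polynomial_Factorial" "HOL-Computational_Algebra.Fundamental_Theorem_Algebra"
begin

lift_definition dy :: "nat \<Rightarrow> nat \<Rightarrow> dyadic" is "\<lambda>m i. of_nat i / 2 ^ m :: rat"
proof -
  fix m i :: nat
  have "(of_nat i / 2 ^ m :: rat) * 2 ^ m = of_nat i" by simp
  then show "0 \<le> (of_nat i / 2 ^ m :: rat) \<and> (\<exists>n::nat. (of_nat i / 2 ^ m :: rat) * 2 ^ n \<in> \<int>)"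
    by (metis Ints_of_nat divide_nonneg_pos of_nat_0_le_iff zero_less_numeral zero_less_power)
qed

lemma dy_add: "dy m (i + j) = dy m i + dy m j"
  by transfer (simp add: add_divide_distrib)

lemma dy_0: "dy m 0 = 0"
  by transfer simp

lemma dy_Suc_double: "dy (Suc m) (2 * i) = dy m i"
  by transfer simp

lemma dy_inj: "dy m i = dy m j \<Longrightarrow> i = j"
  by transfer simp

lemma dy_zero_nat: "dy 0 i = dyadic_of_nat i"
  by transfer simp

lemma dy_surj: "\<exists>m i. q = dy m i"
proof transfer
  fix q :: rat
  assume "0 \<le> q \<and> (\<exists>n::nat. q * 2 ^ n \<in> \<int>)"
  then obtain n where q0: "0 \<le> q" and "q * 2 ^ n \<in> \<int>" by blast
  then obtain z where z: "q * 2 ^ n = of_int z" by (auto elim: Ints_cases)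
  have "z \<ge> 0" using q0 z by (metis of_int_0_le_iff zero_le_numeral zero_le_power mult_nonneg_nonneg)
  then have "q = of_nat (nat z) / 2 ^ n" using z by (simp add: field_simps)
  then show "\<exists>m i. q = of_nat i / 2 ^ m" by blast
qed

lemma dy_shift: "dy m i = dy (m + t) (i * 2 ^ t)"
  by transfer (simp add: power_add)

definition Psi :: "nat \<Rightarrow> int poly \<Rightarrow> QM" where
  "Psi m p = (\<Sum>i\<le>degree p. Poly_Mapping.single (dy m i) (of_int (coeff p i)))"

lemma QM_Psi: "QM_of_int_poly P = Psi 0 P"
  by (simp add: QM_of_int_poly_def Psi_def dy_zero_nat)

lemma Psi_sum: assumes "degree p < n"
  shows "Psi m p = (\<Sum>i<n. Poly_Mapping.single (dy m i) (of_int (coeff p i)))"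
proof -
  have "(\<Sum>i<n. Poly_Mapping.single (dy m i) (of_int (coeff p i) :: rat)) =
        (\<Sum>i\<in>{..degree p}. Poly_Mapping.single (dy m i) (of_int (coeff p i)))"
    using assms by (intro sum.mono_neutral_right) (auto simp: coeff_eq_0)
  then show ?thesis by (simp add: Psi_def)
qed

definition Xm :: "nat \<Rightarrow> QM" where "Xm m = Poly_Mapping.single (dy m 1) 1"

lemma single_shift: "Poly_Mapping.single (dy m (Suc i)) c = Xm m * Poly_Mapping.single (dy m i) c"
  by (simp add: Xm_def mult_single dy_add[symmetric])

lemma Psi_pCons: "Psi m (pCons a p) = Poly_Mapping.single 0 (of_int a) + Xm m * Psi m p"
proof -
  define n where "n = Suc (degree p)"
  have d1: "degree (pCons a p) < Suc n" by (simp add: n_def degree_pCons_le le_imp_less_Suc)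
  have d2: "degree p < n" by (simp add: n_def)
  have "Psi m (pCons a p) = (\<Sum>i<Suc n. Poly_Mapping.single (dy m i) (of_int (coeff (pCons a p) i)))"
    by (rule Psi_sum[OF d1])
  also have "\<dots> = Poly_Mapping.single (dy m 0) (of_int a) +
     (\<Sum>i<n. Poly_Mapping.single (dy m (Suc i)) (of_int (coeff p i)))"
    unfolding sum.lessThan_Suc_shift by simp
  also have "\<dots> = Poly_Mapping.single 0 (of_int a) + Xm m * Psi m p"
    by (simp add: Psi_sum[OF d2] single_shift sum_distrib_left dy_0)
  finally show ?thesis .
qed

lemma Psi_0[simp]: "Psi m 0 = 0"
  by (simp add: Psi_def)

lemma Psi_const: "Psi m [:c:] = Poly_Mapping.single 0 (of_int c)"
  using Psi_pCons[of m c 0] by simp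

lemma Psi_add: "Psi m (p + q) = Psi m p + Psi m q"
proof -
  define n where "n = Suc (max (degree p) (degree q))"
  have "degree (p + q) < n" using degree_add_le_max[of p q] by (simp add: n_def)
  moreover have "degree p < n" "degree q < n" by (auto simp: n_def)
  ultimately show ?thesis
    by (simp add: Psi_sum single_add sum.distrib)
qed

lemma Psi_smult: "Psi m (smult a q) = Poly_Mapping.single 0 (of_int a) * Psi m q"
proof -
  define n where "n = Suc (degree q)"
  have "degree (smult a q) < n" "degree q < n" by (auto simp: n_def)
  then show ?thesis
    by (simp add: Psi_sum sum_distrib_left mult_single del: single_of_int)
qed

lemma Psi_mult: "Psi m (p * q) = Psi m p * Psi m q"
proof (induction p)
  case 0
  then show ?case by simp
next
  case (pCons a p)
  have "Psi m (pCons a p * q) = Psi m (smult a q) + Psi m (pCons 0 (p * q))"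
    by (simp add: Psi_add)
  also have "\<dots> = Poly_Mapping.single 0 (of_int a) * Psi m q + Xm m * (Psi m p * Psi m q)"
    by (simp add: Psi_smult Psi_pCons[of m 0] pCons.IH)
  also have "\<dots> = Psi m (pCons a p) * Psi m q"
    by (simp add: Psi_pCons algebra_simps)
  finally show ?case .
qed

lemma Psi_1: "Psi m 1 = 1"
  using Psi_const[of m 1] by (simp add: one_pCons)

lemma Xm_sq: "Xm (Suc m) * Xm (Suc m) = Xm m"
proof -
  have "dy (Suc m) 1 + dy (Suc m) 1 = dy m 1" by transfer simp
  then show ?thesis by (simp add: Xm_def mult_single)
qed

lemma Psi_sq: "Psi (Suc m) [:0,0,1:] = Xm m"
proof -
  have "Psi (Suc m) [:0,0,1:] = Xm (Suc m) * Xm (Suc m)"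
    by (simp add: Psi_pCons Psi_const)
  also have "\<dots> = Xm m"
    proof -
      have "dy (Suc m) 1 + dy (Suc m) 1 = dy m 1" by transfer simp
      then show ?thesis by (simp add: Xm_def mult_single)
    qed
  finally show ?thesis .
qed

lemma Psi_square_lift: "Psi (Suc m) (square_lift p) = Psi m p"
  unfolding square_lift_def
proof (induction p)
  case 0
  then show ?case by simp
next
  case (pCons a p)
  then show ?case
    by (simp add: pcompose_pCons Psi_add Psi_mult Psi_const Psi_pCons mult.assoc[symmetric] Xm_sq)
qed

lemma Psi_square_lift_iter: "Psi (m + t) ((square_lift ^^ t) p) = Psi m p"
  by (induction t) (simp_all add: Psi_square_lift)

lemma lookup_Psi: "Poly_Mapping.lookup (Psi m p) (dy m i) = of_int (coeff p i)"
proof -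
  define n where "n = Suc (max i (degree p))"
  have "degree p < n" "i < n" by (auto simp: n_def)
  have "Poly_Mapping.lookup (Psi m p) (dy m i) =
     (\<Sum>j<n. (of_int (coeff p j) when dy m j = dy m i))"
    by (simp add: Psi_sum[OF \<open>degree p < n\<close>] lookup_sum lookup_single)
  also have "\<dots> = (\<Sum>j<n. (if j = i then of_int (coeff p j) else 0))"
    by (intro sum.cong) (auto dest: dy_inj simp: when_def)
  also have "\<dots> = of_int (coeff p i)" using \<open>i < n\<close> by simp
  finally show ?thesis .
qed

lemma Psi_inj: "Psi m p = Psi m q \<Longrightarrow> p = q"
  by (rule poly_eqI) (metis lookup_Psi of_int_eq_iff)


lemma Psi_smult': "Psi m (smult a q) = of_int a * Psi m q"
  using Psi_smult[of m a q] by simp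

lemma Psi_const': "Psi m [:c:] = of_int c"
  using Psi_const[of m c] by simp

lemma Psi_lift: assumes "Psi m p = X" "m \<le> m'" shows "\<exists>p'. Psi m' p' = X"
proof -
  obtain t where "m' = m + t" using assms(2) le_Suc_ex by blast
  then show ?thesis using Psi_square_lift_iter[of m t p] assms(1) by blast
qed

lemma Psi_monom: "Psi n (monom u i) = Poly_Mapping.single (dy n i) (of_int u)"
proof -
  have "Psi n (monom u i) = (\<Sum>j<Suc i. Poly_Mapping.single (dy n j) (of_int (coeff (monom u i) j)))"
    by (rule Psi_sum) (simp add: degree_monom_eq le_imp_less_Suc degree_monom_le)
  also have "\<dots> = (\<Sum>j<Suc i. if j = i then Poly_Mapping.single (dy n i) (of_int u) else 0)"
    by (intro sum.cong) (auto simp: coeff_monom)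
  also have "\<dots> = Poly_Mapping.single (dy n i) (of_int u)" by simp
  finally show ?thesis .
qed

lemma rep_single: "\<exists>m D p. D > 0 \<and> Psi m p = of_int D * Poly_Mapping.single q (r::rat)"
proof -
  obtain n i where q: "q = dy n i" using dy_surj by blast
  obtain u v where uv: "quotient_of r = (u, v)" by (cases "quotient_of r")
  then have r: "r = of_int u / of_int v" and v: "v > 0"
    by (auto simp: quotient_of_div quotient_of_denom_pos)
  have "of_int v * Poly_Mapping.single q r = Poly_Mapping.single 0 (of_int v) * Poly_Mapping.single q r"
    by simp
  also have "\<dots> = Poly_Mapping.single q (of_int u)"
    using v by (simp add: mult_single r del: single_of_int)
  finally show ?thesis using v Psi_monom[of n u i] q by metis
qed

lemma rep_sum: "finite K \<Longrightarrow> \<exists>m D p. D > 0 \<and> Psi m p = of_int D * (\<Sum>q\<in>K. Poly_Mapping.single q (c q :: rat))"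
proof (induction K rule: finite_induct)
  case empty
  show ?case by (rule exI[of _ 0], rule exI[of _ 1], rule exI[of _ 0]) simp
next
  case (insert x F)
  obtain m1 D1 p1 where 1: "D1 > 0" "Psi m1 p1 = of_int D1 * Poly_Mapping.single x (c x)"
    using rep_single by blast
  obtain m2 D2 p2 where 2: "D2 > 0" "Psi m2 p2 = of_int D2 * (\<Sum>q\<in>F. Poly_Mapping.single q (c q))"
    using insert.IH by blast
  obtain p1' where p1': "Psi (m1 + m2) p1' = of_int D1 * Poly_Mapping.single x (c x)"
    using Psi_lift[OF 1(2), of "m1+m2"] by auto
  obtain p2' where p2': "Psi (m1 + m2) p2' = of_int D2 * (\<Sum>q\<in>F. Poly_Mapping.single q (c q))"
    using Psi_lift[OF 2(2), of "m1+m2"] by auto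
  have "Psi (m1 + m2) (smult D2 p1' + smult D1 p2') =
     of_int (D1 * D2) * (\<Sum>q\<in>insert x F. Poly_Mapping.single q (c q))"
    using insert.hyps by (simp add: Psi_add Psi_smult' p1' p2' algebra_simps)
  then show ?case using 1(1) 2(1) by (metis mult_pos_pos)
qed

lemma QM_expand: "(a::QM) = (\<Sum>q\<in>Poly_Mapping.keys a. Poly_Mapping.single q (Poly_Mapping.lookup a q))"
proof (rule poly_mapping_eqI)
  fix k
  show "Poly_Mapping.lookup a k =
    Poly_Mapping.lookup (\<Sum>q\<in>Poly_Mapping.keys a. Poly_Mapping.single q (Poly_Mapping.lookup a q)) k"
    by (simp add: lookup_sum lookup_single when_def in_keys_iff)
qed

lemma rep: "\<exists>m D p. m \<ge> k \<and> D > 0 \<and> Psi m p = of_int D * (a::QM)"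
proof -
  obtain m D p where "D > 0" "Psi m p = of_int D * a"
    using rep_sum[of "Poly_Mapping.keys a" "Poly_Mapping.lookup a"] QM_expand[of a] by auto
  moreover obtain p' where "Psi (m + k) p' = of_int D * a" using Psi_lift[OF calculation(2), of "m+k"] by auto
  ultimately show ?thesis by (metis le_add2)
qed

lemma degree_square_lift: "degree (square_lift p) = 2 * degree p"
  by (simp add: square_lift_def degree_pcompose)

lemma degree_square_lift_iter: "degree ((square_lift ^^ t) p) = 2 ^ t * degree p"
  by (induction t) (simp_all add: degree_square_lift)

lemma of_int_QM_unit: "c \<noteq> 0 \<Longrightarrow> (of_int c :: QM) * Poly_Mapping.single 0 (1 / of_int c) = 1"
proof -
  assume "c \<noteq> 0"
  have "(of_int c :: QM) * Poly_Mapping.single 0 (1 / of_int c) =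
        Poly_Mapping.single 0 (of_int c) * Poly_Mapping.single 0 (1 / of_int c)" by simp
  also have "\<dots> = 1" using \<open>c \<noteq> 0\<close> by (simp add: mult_single del: single_of_int)
  finally show ?thesis .
qed

lemma unit_from_rep: assumes "D \<noteq> 0" "c \<noteq> 0" "of_int D * b = (of_int c :: QM)" shows "b dvd 1"
proof -
  have "b * (of_int D * Poly_Mapping.single 0 (1 / of_int c)) = 1"
    using assms of_int_QM_unit[of c] by (simp add: mult.assoc[symmetric] mult.commute)
  then show ?thesis by (metis dvdI)
qed

lemma L2:
  fixes f :: "int poly"
  assumes irr: "\<And>j. irreducible ((square_lift ^^ j) f)"
  shows "atomic_QM (Psi k f)"
proof (cases "degree f = 0")
  case True
  then obtain c where f: "f = [:c:]" by (meson degree_eq_zeroE)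
  have "f \<noteq> 0" using irr[of 0] by auto
  then have "c \<noteq> 0" using f by auto
  then have "Psi k f dvd 1" using f of_int_QM_unit[of c] Psi_const'[of k c] by (metis dvdI)
  then show ?thesis by (simp add: atomic_QM_def)
next
  case False
  define F where "F j = (square_lift ^^ j) f" for j
  have PsiF: "Psi (k + j) (F j) = Psi k f" for j by (simp add: F_def Psi_square_lift_iter)
  have degF: "degree (F j) \<ge> 1" for j using False by (simp add: F_def degree_square_lift_iter)
  have "irreducible (Psi k f)"
  proof (rule irreducibleI)
    show "Psi k f \<noteq> 0"
      using Psi_inj[of k f 0] False by auto
  next
    show "\<not> Psi k f dvd 1"
    proof
      assume "Psi k f dvd 1"
      then obtain b where b: "1 = Psi k f * b" by (auto elim: dvdE)
      obtain m D q where mq: "m \<ge> k" "D > 0" "Psi m q = of_int D * b" using rep by blast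
      obtain j where j: "m = k + j" using mq(1) le_Suc_ex by blast
      have "Psi k f * (of_int D * b) = of_int D" using b by (metis mult.left_commute mult_1_right)
      then have "Psi m (F j * q) = Psi m [:D:]"
        using PsiF[of j] mq(3) by (simp add: Psi_mult Psi_const' j)
      then have "F j * q = [:D:]" by (rule Psi_inj)
      moreover have "q \<noteq> 0" using calculation mq(2) by auto
      moreover have "F j \<noteq> 0" using degF[of j] by auto
      ultimately have "degree (F j) + degree q = 0" by (metis degree_mult_eq degree_pCons_0)
      then show False using degF[of j] by simp
    qed
  next
    fix a b assume ab: "Psi k f = a * b"
    obtain m1 D1 p1 where m1: "m1 \<ge> k" "D1 > 0" "Psi m1 p1 = of_int D1 * a" using rep by blast
    obtain m2 D2 p2 where m2: "m2 \<ge> m1" "D2 > 0" "Psi m2 p2 = of_int D2 * b" using rep by blast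
    obtain p1' where p1': "Psi m2 p1' = of_int D1 * a" using Psi_lift[OF m1(3) m2(1)] by blast
    obtain j where j: "m2 = k + j" using m1(1) m2(1) le_Suc_ex by (metis le_trans)
    have "Psi m2 (p1' * p2) = (of_int D1 * a) * (of_int D2 * b)" by (simp add: Psi_mult p1' m2(3))
    also have "\<dots> = of_int (D1 * D2) * Psi k f" using ab by (simp add: algebra_simps)
    also have "\<dots> = Psi m2 (smult (D1 * D2) (F j))" using PsiF[of j] j by (simp add: Psi_smult')
    finally have "Psi m2 (p1' * p2) = Psi m2 (smult (D1 * D2) (F j))" .
    then have eq: "p1' * p2 = smult (D1 * D2) (F j)" by (rule Psi_inj)
    have Fj0: "F j \<noteq> 0" using degF[of j] by auto
    have D0: "D1 * D2 \<noteq> 0" using m1(2) m2(2) by simp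
    have prod0: "p1' * p2 \<noteq> 0" using eq Fj0 D0 by simp
    then have p10: "p1' \<noteq> 0" and p20: "p2 \<noteq> 0" by auto
    have degsum: "degree p1' + degree p2 = degree (F j)"
      using eq p10 p20 D0 by (metis degree_mult_eq degree_smult_eq)
    have "prime_elem (F j)" using irr[of j] by (simp add: F_def irreducible_imp_prime_poly)
    moreover have "F j dvd p1' * p2" using eq by (simp add: dvd_smult)
    ultimately have "F j dvd p1' \<or> F j dvd p2" by (simp add: prime_elem_dvd_mult_iff)
    then show "a dvd 1 \<or> b dvd 1"
    proof
      assume "F j dvd p1'"
      then have "degree (F j) \<le> degree p1'" using p10 by (rule dvd_imp_degree_le)
      then have "degree p2 = 0" using degsum by simp
      then obtain c where c: "p2 = [:c:]" by (meson degree_eq_zeroE)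
      then have "c \<noteq> 0" using p20 by auto
      have "of_int D2 * b = (of_int c :: QM)" using m2(3) c Psi_const' by metis
      then show ?thesis using unit_from_rep[of D2 c b] m2(2) \<open>c \<noteq> 0\<close> by simp
    next
      assume "F j dvd p2"
      then have "degree (F j) \<le> degree p2" using p20 by (rule dvd_imp_degree_le)
      then have "degree p1' = 0" using degsum by simp
      then obtain c where c: "p1' = [:c:]" by (meson degree_eq_zeroE)
      then have "c \<noteq> 0" using p10 by auto
      have "of_int D1 * a = (of_int c :: QM)" using p1' c Psi_const' by metis
      then show ?thesis using unit_from_rep[of D1 c a] m1(2) \<open>c \<noteq> 0\<close> by simp
    qed
  qed
  then show ?thesis unfolding atomic_QM_def by (intro disjI2 exI[of _ "[Psi k f]"]) simp
qed

lemma irred_unit_mult: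
  fixes u y :: "'a :: comm_ring_1"
  assumes "u dvd 1" "irreducible y" shows "irreducible (u * y)"
proof -
  obtain v where v: "1 = u * v" using assms(1) by (auto elim: dvdE)
  have y: "y = v * (u * y)" using v by (metis mult.assoc mult.commute mult_1_left)
  show ?thesis
  proof (rule irreducibleI)
    show "u * y \<noteq> 0" using y assms(2) by (metis irreducible_def mult_zero_right)
    show "\<not> u * y dvd 1" using assms(2) by (meson dvd_mult_right irreducible_def)
    fix a b assume ab: "u * y = a * b"
    then have "y = (v * a) * b" using y by (simp add: mult.assoc)
    then have "v * a dvd 1 \<or> b dvd 1" using assms(2) irreducibleD by blast
    then show "a dvd 1 \<or> b dvd 1" by (meson dvd_mult_right)
  qed
qed

lemma atomic_mult: assumes "atomic_QM a" "atomic_QM b" shows "atomic_QM (a * b)"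
proof -
  have unit_case: "atomic_QM (u * x)" if uu: "u dvd 1" and xx: "atomic_QM x" for u x
  proof (cases "x dvd 1")
    case True then have "u * x dvd 1 * 1" using uu mult_dvd_mono by blast
    then show ?thesis by (simp add: atomic_QM_def)
  next
    case False
    then obtain xs where xs: "xs \<noteq> []" "\<forall>y\<in>set xs. irreducible y" "x = prod_list xs"
      using xx by (auto simp: atomic_QM_def)
    then obtain y ys where yys: "xs = y # ys" by (cases xs) auto
    have "irreducible (u * y)" using xs(2) yys uu by (simp add: irred_unit_mult)
    then have "atomic_QM (prod_list ((u * y) # ys))"
      unfolding atomic_QM_def using xs(2) yys by (intro disjI2 exI[of _ "(u*y) # ys"]) auto
    then show ?thesis using xs(3) yys by (simp add: mult.assoc)
  qed
  show ?thesis
  proof (cases "a dvd 1")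
    case True then show ?thesis using unit_case assms by blast
  next
    case False note a = this
    show ?thesis
    proof (cases "b dvd 1")
      case True then show ?thesis using unit_case assms by (metis mult.commute)
    next
      case False
      obtain xs where xs: "xs \<noteq> []" "\<forall>y\<in>set xs. irreducible y" "a = prod_list xs"
        using assms(1) a by (auto simp: atomic_QM_def)
      obtain ys where ys: "ys \<noteq> []" "\<forall>y\<in>set ys. irreducible y" "b = prod_list ys"
        using assms(2) False by (auto simp: atomic_QM_def)
      show ?thesis unfolding atomic_QM_def
        using xs ys by (intro disjI2 exI[of _ "xs @ ys"]) auto
    qed
  qed
qed


definition ev :: "int poly \<Rightarrow> complex \<Rightarrow> complex" where
  "ev p z = poly (map_poly of_int p) z"

lemma ev_pCons: "ev (pCons a p) z = of_int a + z * ev p z"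
  by (simp add: ev_def map_poly_pCons)

lemma ev_0[simp]: "ev 0 z = 0" by (simp add: ev_def)

lemma ev_const: "ev [:c:] z = of_int c"
  using ev_pCons[of c 0 z] by simp

lemma ev_add: "ev (p + q) z = ev p z + ev q z"
  by (induction p q rule: poly_induct2) (simp_all add: ev_pCons algebra_simps)

lemma ev_smult: "ev (smult a p) z = of_int a * ev p z"
  by (induction p) (simp_all add: ev_pCons algebra_simps)

lemma ev_uminus: "ev (- p) z = - ev p z"
  using ev_add[of p "-p" z] by (simp add: add_eq_0_iff)

lemma ev_diff: "ev (p - q) z = ev p z - ev q z"
  using ev_add[of p "-q" z] ev_uminus[of q z] by simp

lemma ev_mult: "ev (p * q) z = ev p z * ev q z"
  by (induction p) (simp_all add: ev_pCons ev_add ev_smult algebra_simps)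

lemma ev_pcompose: "ev (pcompose p q) z = ev p (ev q z)"
  by (induction p) (simp_all add: ev_pCons ev_add ev_mult ev_const pcompose_pCons)

abbreviation sq :: "int poly" where "sq \<equiv> [:0,0,1:]"
abbreviation xx :: "int poly" where "xx \<equiv> [:0,1:]"

lemma xx_xx: "xx * xx = sq" by simp

lemma pCons_as: "pCons a p = [:a:] + xx * p"
  by (simp add: poly_eq_iff coeff_pCons split: nat.splits)

lemma even_odd: "\<exists>E Od. p = pcompose E sq + xx * pcompose Od sq"
proof (induction p)
  case 0
  show ?case by (rule exI[of _ 0], rule exI[of _ 0]) simp
next
  case (pCons a p)
  then obtain E Od where p: "p = pcompose E sq + xx * pcompose Od sq" by blast
  have "pCons a p = pcompose (pCons a Od) sq + xx * pcompose E sq"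
    by (simp add: pCons_as[of a p] p pcompose_pCons algebra_simps)
  then show ?case by blast
qed

lemma parity_unique:
  assumes "pcompose U sq + xx * pcompose V sq = pcompose W sq"
  shows "V = 0 \<and> U = W"
proof -
  have eq: "pcompose (U - W) sq = - (xx * pcompose V sq)"
    unfolding pcompose_diff assms[symmetric] by simp
  have V: "V = 0"
  proof (rule ccontr)
    assume "V \<noteq> 0"
    then have "pcompose V sq \<noteq> 0" by (simp add: pcompose_eq_0_iff)
    then have "degree (- (xx * pcompose V sq)) = 1 + 2 * degree V"
      by (simp add: degree_mult_eq degree_pcompose)
    moreover have "degree (pcompose (U - W) sq) = 2 * degree (U - W)"
      by (simp add: degree_pcompose)
    ultimately have "2 * degree (U - W) = 1 + 2 * degree V" using eq by simp
    then show False by presburger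
  qed
  then have "pcompose (U - W) sq = 0" using eq by simp
  then have "U - W = 0" by (simp add: pcompose_eq_0_iff)
  then show ?thesis using V by simp
qed

lemma lemmaC:
  fixes R :: "int poly"
  assumes irr: "irreducible R" and deg: "degree R \<ge> 1" and dv: "[:c:] dvd pcompose R sq"
  shows "c dvd 1"
proof -
  obtain B where B: "pcompose R sq = [:c:] * B" using dv by (auto elim: dvdE)
  obtain E Od where EO: "B = pcompose E sq + xx * pcompose Od sq" using even_odd by blast
  have "pcompose (smult c E) sq + xx * pcompose (smult c Od) sq = pcompose R sq"
    by (simp add: B EO pcompose_smult algebra_simps)
  then have "smult c E = R" using parity_unique by blast
  then have R: "R = [:c:] * E" by simp
  then have "[:c:] dvd 1 \<or> E dvd 1" using irr irreducibleD by blast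
  moreover have "\<not> E dvd 1"
  proof
    assume "E dvd 1"
    then have "degree E = 0" by (auto simp: is_unit_poly_iff)
    then have "degree R = 0" using R degree_mult_le[of "[:c:]" E] by simp
    then show False using deg by simp
  qed
  ultimately show ?thesis by (simp add: is_unit_const_poly_iff)
qed

lemma lemmaM:
  fixes R N :: "int poly"
  assumes pr: "prime_elem R" and R: "ev R z = 0" and N0: "N \<noteq> 0" and N: "ev N z = 0"
  shows "degree R \<le> degree N"
proof -
  obtain m where m: "m \<noteq> 0" "ev m z = 0" and mmin: "\<And>y. y \<noteq> 0 \<and> ev y z = 0 \<Longrightarrow> degree m \<le> degree y"
    using ex_has_least_nat[of "\<lambda>p. p \<noteq> 0 \<and> ev p z = 0" N degree] N0 N by blast
  define r where "r = pseudo_mod R m"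
  obtain a q where aq: "a \<noteq> 0" "smult a R = m * q + r" using pseudo_mod(1)[OF m(1), of R] r_def by blast
  have rdeg: "r = 0 \<or> degree r < degree m" using pseudo_mod(2)[OF m(1), of R] r_def by blast
  have "r = smult a R - m * q" using aq by simp
  then have evr: "ev r z = 0" by (simp add: ev_diff ev_smult ev_mult R m(2))
  have r0: "r = 0"
  proof (rule ccontr)
    assume "r \<noteq> 0"
    then have "degree m \<le> degree r" using mmin evr by blast
    then show False using rdeg \<open>r \<noteq> 0\<close> by simp
  qed
  have R0: "R \<noteq> 0" using pr by auto
  have "R dvd smult a R" by (simp add: dvd_smult)
  then have "R dvd m * q" using aq r0 by simp
  then have "R dvd m \<or> R dvd q" using pr prime_elem_dvd_mult_iff by blast
  then show ?thesis
  proof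
    assume "R dvd m"
    then have "degree R \<le> degree m" using m(1) by (rule dvd_imp_degree_le)
    also have "\<dots> \<le> degree N" using mmin N0 N by blast
    finally show ?thesis .
  next
    assume "R dvd q"
    then obtain t where t: "q = R * t" by (auto elim: dvdE)
    have "[:a:] * R = (m * t) * R" using aq r0 t by (simp add: algebra_simps)
    then have mt: "[:a:] = m * t" using R0 mult_right_cancel by blast
    then have "t \<noteq> 0" using aq(1) by auto
    then have "degree (m * t) = degree m + degree t" using m(1) by (simp add: degree_mult_eq)
    then have "degree m = 0" using mt by (metis degree_pCons_0 add_is_0)
    then obtain c where c: "m = [:c:]" by (meson degree_eq_zeroE)
    then have "c \<noteq> 0" using m(1) by auto
    then show ?thesis using m(2) c by (simp add: ev_const)
  qed
qed

lemma lemmaD: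
  fixes R g :: "int poly"
  assumes irr: "irreducible R" and dv: "g dvd pcompose R sq" and dg: "degree g \<ge> 1"
  shows "degree R \<le> degree g"
proof -
  define gC where "gC = (map_poly of_int g :: complex poly)"
  have "degree gC = degree g" unfolding gC_def by (rule degree_map_poly) simp
  then have "\<not> constant (poly gC)" using dg by (simp add: constant_degree)
  then obtain \<beta> where "poly gC \<beta> = 0" using fundamental_theorem_of_algebra by blast
  then have \<beta>: "ev g \<beta> = 0" by (simp add: ev_def gC_def)
  obtain h where h: "pcompose R sq = g * h" using dv by (auto elim: dvdE)
  have evsq: "ev sq w = w^2" for w by (simp add: ev_pCons ev_const power2_eq_square)
  have "ev R (\<beta>^2) = 0" using \<beta> ev_pcompose[of R sq \<beta>] h ev_mult[of g h \<beta>] evsq by simp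
  define mx where "mx = ([:0,-1:] :: int poly)"
  define h0 where "h0 = g * pcompose g mx"
  obtain E Od where EO: "h0 = pcompose E sq + xx * pcompose Od sq" using even_odd by blast
  have mxmx: "pcompose mx mx = xx" by (simp add: mx_def pcompose_pCons)
  have e1: "pcompose h0 mx = h0"
    by (simp add: h0_def pcompose_mult pcompose_assoc[symmetric] mxmx)
  have e2: "pcompose h0 mx = pcompose E sq - xx * pcompose Od sq"
  proof -
    have s1: "pcompose sq mx = sq" by (simp add: mx_def pcompose_pCons)
    have s2: "pcompose xx mx = - xx" by (simp add: mx_def pcompose_pCons)
    have "pcompose h0 mx = pcompose (pcompose E sq) mx + pcompose xx mx * pcompose (pcompose Od sq) mx"
      by (simp only: EO pcompose_add pcompose_mult)
    also have "\<dots> = pcompose E sq + (- xx) * pcompose Od sq"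
      by (simp only: pcompose_assoc[symmetric] s1 s2)
    finally show ?thesis by simp
  qed
  define X where "X = xx * pcompose Od sq"
  have hA: "h0 = pcompose E sq - X" using e1 e2 unfolding X_def by simp
  have "pcompose E sq + X = pcompose E sq - X"
    by (rule trans[OF _ hA], unfold X_def, rule EO[symmetric])
  then have "X + X = 0" by (simp add: algebra_simps)
  then have "smult (1 + 1) X = 0" by (simp only: smult_add_left smult_1_left)
  then have "X = 0" by simp
  then have "pcompose Od sq = 0" by (simp add: X_def)
  then have "Od = 0" by (simp add: pcompose_eq_0_iff)
  then have h0E: "h0 = pcompose E sq" using EO by simp
  have g0: "g \<noteq> 0" using dg by auto
  have dmx: "degree (pcompose g mx) = degree g" by (simp add: degree_pcompose mx_def)
  then have gmx0: "pcompose g mx \<noteq> 0" using dg by auto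
  have "degree h0 = 2 * degree g" unfolding h0_def using g0 gmx0 dmx by (simp add: degree_mult_eq)
  moreover have "degree h0 = 2 * degree E" using h0E by (simp add: degree_pcompose)
  ultimately have dE: "degree E = degree g" by simp
  have "h0 \<noteq> 0" unfolding h0_def using g0 gmx0 by simp
  then have E0: "E \<noteq> 0" using h0E by auto
  have "ev E (\<beta>^2) = ev h0 \<beta>" using h0E ev_pcompose[of E sq \<beta>] evsq by simp
  also have "\<dots> = 0" by (simp add: h0_def ev_mult \<beta>)
  finally have "ev E (\<beta>^2) = 0" .
  then have "degree R \<le> degree E"
    using lemmaM[OF irreducible_imp_prime_poly[OF irr] \<open>ev R (\<beta>^2) = 0\<close> E0] by simp
  then show ?thesis using dE by simp
qed

lemma L1:
  fixes R :: "int poly"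
  assumes irr: "irreducible R" and red: "\<not> irreducible (pcompose R sq)"
  shows "\<exists>A Q. irreducible A \<and> irreducible Q \<and> pcompose R sq = A * Q"
proof -
  define F where "F = pcompose R sq"
  have degR: "degree R \<ge> 1"
  proof (rule ccontr)
    assume "\<not> degree R \<ge> 1"
    then have "degree R = 0" by simp
    then obtain c where "R = [:c:]" by (rule degree_eq_zeroE)
    then show False using irr red by simp
  qed
  have dF: "degree F = 2 * degree R" by (simp add: F_def degree_pcompose)
  have F0: "F \<noteq> 0" using dF degR by auto
  have Fnu: "\<not> F dvd 1" using dF degR by (auto simp: is_unit_poly_iff)
  have H: "degree R \<le> degree G" if G1: "G dvd F" and G2: "\<not> G dvd 1" for G
  proof (cases "degree G = 0")
    case True
    then obtain c where c: "G = [:c:]" by (rule degree_eq_zeroE)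
    have "[:c:] dvd pcompose R sq" using G1 c F_def by simp
    then have "c dvd 1" by (rule lemmaC[OF irr degR])
    then have "G dvd 1" using c by (simp add: is_unit_const_poly_iff)
    then show ?thesis using G2 by contradiction
  next
    case False
    then have "degree G \<ge> 1" by simp
    moreover have "G dvd pcompose R sq" using G1 F_def by simp
    ultimately show ?thesis using lemmaD[OF irr] by blast
  qed
  have "\<not> irreducible F" using red F_def by simp
  then have "\<exists>A B. F = A * B \<and> \<not> A dvd 1 \<and> \<not> B dvd 1"
    using F0 Fnu by (simp add: irreducible_def)
  then obtain A B where AB: "F = A * B" "\<not> A dvd 1" "\<not> B dvd 1" by blast
  have A0: "A \<noteq> 0" and B0: "B \<noteq> 0" using AB F0 by auto
  have dAB: "degree A + degree B = 2 * degree R" using AB A0 B0 dF by (simp add: degree_mult_eq)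
  have irrX: "irreducible X" if X: "X dvd F" "\<not> X dvd 1" "X \<noteq> 0" "degree X \<le> degree R" for X
  proof (rule irreducibleI)
    show "X \<noteq> 0" "\<not> X dvd 1" using X by auto
    fix a b assume ab: "X = a * b"
    show "a dvd 1 \<or> b dvd 1"
    proof (rule ccontr)
      assume nu: "\<not> (a dvd 1 \<or> b dvd 1)"
      have "a dvd F" by (rule dvd_trans[OF _ X(1)]) (simp add: ab)
      have "b dvd F" by (rule dvd_trans[OF _ X(1)]) (simp add: ab)
      have "degree R \<le> degree a" using H[OF \<open>a dvd F\<close>] nu by blast
      moreover have "degree R \<le> degree b" using H[OF \<open>b dvd F\<close>] nu by blast
      moreover have "degree X = degree a + degree b" using ab X(3) by (simp add: degree_mult_eq)
      ultimately show False using X(4) degR by simp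
    qed
  qed
  have dA: "A dvd F" "B dvd F" using AB(1) by simp_all
  have "degree R \<le> degree A" using H[OF dA(1) AB(2)] .
  moreover have "degree R \<le> degree B" using H[OF dA(2) AB(3)] .
  ultimately have "degree A \<le> degree R" "degree B \<le> degree R" using dAB by auto
  then have "irreducible A" "irreducible B" using irrX[OF dA(1) AB(2) A0] irrX[OF dA(2) AB(3) B0] by auto
  moreover have "pcompose R sq = A * B" using AB(1) F_def by simp
  ultimately show ?thesis by blast
qed


definition Inv :: "int poly \<times> nat \<Rightarrow> bool" where
  "Inv s \<longleftrightarrow> \<not> atomic_QM (Psi (snd s) (fst s)) \<and>
     (irreducible (fst s) \<or> (\<exists>R. irreducible R \<and> fst s = square_lift R))"

definition step :: "int poly \<times> nat \<Rightarrow> int poly \<times> nat" where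
  "step s = (if irreducible (fst s) then (square_lift (fst s), Suc (snd s))
     else (SOME t. snd t = snd s \<and> irreducible (fst t) \<and>
             (\<exists>Q. irreducible Q \<and> fst s = fst t * Q) \<and> \<not> atomic_QM (Psi (snd s) (fst t))))"

lemma step_irr: "irreducible p \<Longrightarrow> step (p, k) = (square_lift p, Suc k)"
  by (simp add: step_def)

lemma step_red:
  assumes inv: "Inv (p, k)" and red: "\<not> irreducible p"
  shows "snd (step (p, k)) = k \<and> irreducible (fst (step (p, k))) \<and>
             (\<exists>Q. irreducible Q \<and> p = fst (step (p, k)) * Q) \<and> \<not> atomic_QM (Psi k (fst (step (p, k))))"
proof -
  obtain R where R: "irreducible R" "p = square_lift R" using inv red by (auto simp: Inv_def)
  then have "\<not> irreducible (pcompose R sq)" using red by (simp add: square_lift_def)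
  then obtain A Q where AQ: "irreducible A" "irreducible Q" "pcompose R sq = A * Q"
    using L1[OF R(1)] by blast
  have p: "p = A * Q" using AQ(3) R(2) by (simp add: square_lift_def)
  have na: "\<not> atomic_QM (Psi k p)" using inv by (simp add: Inv_def)
  have ex: "\<exists>t. snd t = k \<and> irreducible (fst t) \<and>
             (\<exists>Q. irreducible Q \<and> p = fst t * Q) \<and> \<not> atomic_QM (Psi k (fst t))"
  proof (cases "atomic_QM (Psi k A)")
    case True
    have "\<not> atomic_QM (Psi k Q)"
    proof
      assume "atomic_QM (Psi k Q)"
      then have "atomic_QM (Psi k A * Psi k Q)" using True atomic_mult by blast
      then show False using na p by (simp add: Psi_mult)
    qed
    moreover have "p = Q * A" using p by (simp add: mult.commute)
    ultimately show ?thesis using AQ by (intro exI[of _ "(Q, k)"]) auto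
  next
    case False
    then show ?thesis using AQ p by (intro exI[of _ "(A, k)"]) auto
  qed
  have "step (p, k) = (SOME t. snd t = k \<and> irreducible (fst t) \<and>
             (\<exists>Q. irreducible Q \<and> p = fst t * Q) \<and> \<not> atomic_QM (Psi k (fst t)))"
    using red by (simp add: step_def)
  then show ?thesis using someI_ex[OF ex] by simp
qed

lemma step_Inv: assumes "Inv s" shows "Inv (step s)"
proof -
  obtain p k where s: "s = (p, k)" by (cases s)
  show ?thesis
  proof (cases "irreducible p")
    case True
    then show ?thesis using assms s by (auto simp: step_irr Inv_def Psi_square_lift)
  next
    case False
    then show ?thesis using step_red[of p k] assms s by (auto simp: Inv_def)
  qed
qed

theorem proposition4p5:
  fixes P :: "int poly"
  assumes "irreducible P"
    and "\<not> atomic_QM (QM_of_int_poly P)"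
  shows "\<exists>Ps. splitting_sequence P Ps \<and> infinite {n. string_is_S Ps n}"
proof -
  define st where "st n = (step ^^ n) (P, 0)" for n
  have st0: "st 0 = (P, 0)" by (simp add: st_def)
  have stS: "st (Suc n) = step (st n)" for n by (simp add: st_def)
  have inv: "Inv (st n)" for n
  proof (induction n)
    case 0
    then show ?case using assms by (simp add: st0 Inv_def QM_Psi)
  next
    case (Suc n)
    then show ?case by (simp add: stS step_Inv)
  qed
  define Ps where "Ps n = fst (st n)" for n
  have split: "splitting_sequence P Ps"
    unfolding splitting_sequence_def
  proof (intro conjI allI impI)
    show "Ps 0 = P" by (simp add: Ps_def st0)
  next
    fix n assume irr: "irreducible (Ps n)"
    obtain p k where pk: "st n = (p, k)" by (cases "st n")
    have "p = Ps n" using pk by (simp add: Ps_def)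
    then have "step (st n) = (square_lift (Ps n), Suc k)" using pk irr step_irr by simp
    then show "Ps (Suc n) = square_lift (Ps n)" by (simp add: Ps_def stS)
  next
    fix n assume red: "\<not> irreducible (Ps n)"
    obtain p k where pk: "st n = (p, k)" by (cases "st n")
    have pP: "p = Ps n" using pk by (simp add: Ps_def)
    have "Inv (p, k)" using inv[of n] pk by simp
    from step_red[OF this] red pP
    have "\<exists>Q. irreducible (fst (step (p, k))) \<and> irreducible Q \<and> p = fst (step (p, k)) * Q" by simp
    moreover have "Ps (Suc n) = fst (step (p, k))" using pk by (simp add: Ps_def stS)
    ultimately show "\<exists>Q. irreducible (Ps (Suc n)) \<and> irreducible Q \<and> Ps n = Ps (Suc n) * Q"
      using pP by simp
  qed
  have "infinite {n. string_is_S Ps n}"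
  proof
    assume fin: "finite {n. string_is_S Ps n}"
    then have "\<exists>m. \<forall>n\<in>{n. string_is_S Ps n}. n \<le> m"
      by (simp only: finite_nat_set_iff_bounded_le)
    then obtain b where b: "\<forall>n\<in>{n. string_is_S Ps n}. n \<le> b" by blast
    define N where "N = Suc b"
    have irrN: "irreducible (Ps n)" if nN: "n \<ge> N" for n
    proof (rule ccontr)
      assume "\<not> irreducible (Ps n)"
      then have "n \<in> {n. string_is_S Ps n}" by (simp add: string_is_S_def)
      then have "n \<le> b" using b by blast
      then show False using nN N_def by simp
    qed
    have stj: "st (N + j) = ((square_lift ^^ j) (Ps N), snd (st N) + j)" for j
    proof (induction j)
      case 0
      then show ?case by (simp add: Ps_def)
    next
      case (Suc j)
      have "irreducible (Ps (N + j))" using irrN by simp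
      then have "irreducible ((square_lift ^^ j) (Ps N))" using Suc by (simp add: Ps_def)
      then show ?case using Suc by (simp add: stS step_irr)
    qed
    have "irreducible ((square_lift ^^ j) (Ps N))" for j
      using irrN[of "N + j"] stj[of j] by (simp add: Ps_def)
    then have "atomic_QM (Psi (snd (st N)) (Ps N))" by (rule L2)
    then show False using inv[of N] by (simp add: Inv_def Ps_def)
  qed
  then show ?thesis using split by blast
qed


end
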